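(* Let $1\le D\le n-1$ and $1\le x\le D$. There is no deterministic consensus algorithm for $n$ processes (even one that knows $n$, $D$ and $x$) that solves consensus under the message adversary $\lozenge\mathrm{STABLE}_D(x)$. This remains true even for the smaller message adversary consisting of those sequences in $\lozenge\mathrm{STABLE}_D(x)$ whose first $D$ graphs $\mathcal{G}^1,\dots,\mathcal{G}^D$ form an $R$-rooted sequence for some set $R\subseteq\Pi$, where $R$ is not known to the processes a priori.
   Context: Model: a finite set $\Pi$ of $n$ processes with unique identifiers, which never fail and run in lock-step synchronous rounds $r=1,2,\dots$; in each round every process sends a message to every other process, receives some of them, and makes a local state transition. The round-$r$ communication graph $\mathcal{G}^r$ is a directed graph on $\Pi$ with edge $(p\to q)$ iff $q$ receives $p$'s round-$r$ message; all self-loops are always present. A message adversary is a set of infinite sequences of communication graphs (the admissible sequences); an algorithm solves consensus under a message adversary if for every assignment of inputs and every admissible sequence the run satisfies: Termination (every process eventually irrevocably decides), Agreement (all decisions are equal), Validity (every decision is some process's input). A root component of a graph $\mathcal{G}$ is a nonempty $R\subseteq\Pi$ that is the vertex set of a strongly connected component of $\mathcal{G}$ with no edge $(p\to q)$, $q\in R$, $p\notin R$. A graph is rooted if it has exactly one root component $\operatorname{Root}(\mathcal{G})$. A nonempty sequence of consecutive graphs is $R$-rooted if each graph in it is rooted with root component $R$. Compound graph: $(p,q)\in\mathcal{G}\circ\mathcal{G}'$ iff $(p,p')\in\mathcal{G}$ and $(p',q)\in\mathcal{G}'$ for some $p'$. Causal past: $\mathrm{CP}_p(a,a)=\{p\}$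 and, for $a<b$, $\mathrm{CP}_p(a,b)$ is the set of in-neighbours of $p$ in $\mathcal{G}^{a+1}\circ\cdots\circ\mathcal{G}^b$. $\mathrm{DIAM}(D)$: all sequences such that for every subsequence $\mathcal{G}^{r_1},\dots,\mathcal{G}^{r_1+D-1}$ of $D$ consecutive graphs that is $R$-rooted, $R\subseteq \mathrm{CP}_p(r_1-1,r_1+D-1)$ for every $p\in\Pi$. $\lozenge\mathrm{STABILITY}(x)$: all sequences containing, for some $R\subseteq\Pi$, an $R$-rooted subsequence of at least $x$ consecutive graphs. $\mathrm{ROOTED}$: all sequences in which every graph is rooted. $\lozenge\mathrm{STABLE}_D(x)=\mathrm{ROOTED}\cap\lozenge\mathrm{STABILITY}(x)\cap\mathrm{DIAM}(D)$. *)

theory Defs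
  imports Main
begin

(* Processes are the identifiers 0..n-1, i.e. Pi = {..<n}.
   A communication graph is a set of directed edges (p,q) meaning q receives p's message.
   A sequence of graphs is G :: nat => graph, where G r is the round-r graph for r >= 1
   (G 0 is unused). *)

type_synonym graph = "(nat \<times> nat) set"
type_synonym gseq = "nat \<Rightarrow> graph"

definition is_graph :: "nat \<Rightarrow> graph \<Rightarrow> bool" where
  "is_graph n g \<longleftrightarrow> g \<subseteq> {..<n} \<times> {..<n} \<and> (\<forall>p<n. (p, p) \<in> g)"

definition valid_seq :: "nat \<Rightarrow> gseq \<Rightarrow> bool" where
  "valid_seq n G \<longleftrightarrow> (\<forall>r\<ge>1. is_graph n (G r))"

definition is_root_comp :: "nat \<Rightarrow> graph \<Rightarrow> nat set \<Rightarrow> bool" where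
  "is_root_comp n g R \<longleftrightarrow>
     R \<noteq> {} \<and> R \<subseteq> {..<n} \<and>
     (\<exists>p\<in>R. R = {q. (p, q) \<in> g\<^sup>* \<and> (q, p) \<in> g\<^sup>*}) \<and>
     (\<forall>p q. (p, q) \<in> g \<and> q \<in> R \<longrightarrow> p \<in> R)"

definition rooted :: "nat \<Rightarrow> graph \<Rightarrow> bool" where
  "rooted n g \<longleftrightarrow> (\<exists>!R. is_root_comp n g R)"

definition Root :: "nat \<Rightarrow> graph \<Rightarrow> nat set" where
  "Root n g = (THE R. is_root_comp n g R)"

definition R_rooted :: "nat \<Rightarrow> gseq \<Rightarrow> nat set \<Rightarrow> nat \<Rightarrow> nat \<Rightarrow> bool" where
  "R_rooted n G R a b \<longleftrightarrow> a \<le> b \<and> (\<forall>r\<in>{a..b}. rooted n (G r) \<and> Root n (G r) = R)"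

(* compound graph G(a+1) o ... o G(b); identity if b <= a *)
fun compound :: "gseq \<Rightarrow> nat \<Rightarrow> nat \<Rightarrow> graph" where
  "compound G a 0 = Id"
| "compound G a (Suc b) = (if Suc b \<le> a then Id else compound G a b O G (Suc b))"

definition CP :: "gseq \<Rightarrow> nat \<Rightarrow> nat \<Rightarrow> nat \<Rightarrow> nat set" where
  "CP G p a b = {q. (q, p) \<in> compound G a b}"

definition DIAM :: "nat \<Rightarrow> nat \<Rightarrow> gseq set" where
  "DIAM n D = {G. \<forall>r1\<ge>1. \<forall>R. R_rooted n G R r1 (r1 + D - 1) \<longrightarrow>
                      (\<forall>p<n. R \<subseteq> CP G p (r1 - 1) (r1 + D - 1))}"

definition EV_STABILITY :: "nat \<Rightarrow> nat \<Rightarrow> gseq set" where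
  "EV_STABILITY n x = {G. \<exists>R r1. r1 \<ge> 1 \<and> R \<subseteq> {..<n} \<and> R_rooted n G R r1 (r1 + x - 1)}"

definition ROOTED :: "nat \<Rightarrow> gseq set" where
  "ROOTED n = {G. \<forall>r\<ge>1. rooted n (G r)}"

definition EV_STABLE :: "nat \<Rightarrow> nat \<Rightarrow> nat \<Rightarrow> gseq set" where
  "EV_STABLE n D x = {G. valid_seq n G} \<inter> ROOTED n \<inter> EV_STABILITY n x \<inter> DIAM n D"

definition EV_STABLE_init :: "nat \<Rightarrow> nat \<Rightarrow> nat \<Rightarrow> gseq set" where
  "EV_STABLE_init n D x = {G \<in> EV_STABLE n D x. \<exists>R. R \<subseteq> {..<n} \<and> R_rooted n G R 1 D}"

(* Deterministic algorithm: init p v (initial state of p with input v),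
   msg p s q (message sent by p in state s to q),
   tr p s rcv (new state of p; rcv q = Some m iff p received m from q),
   dec p s (decision output in state s). *)
primrec run :: "nat \<Rightarrow> (nat \<Rightarrow> 'v \<Rightarrow> 's) \<Rightarrow> (nat \<Rightarrow> 's \<Rightarrow> nat \<Rightarrow> 'm)
   \<Rightarrow> (nat \<Rightarrow> 's \<Rightarrow> (nat \<Rightarrow> 'm option) \<Rightarrow> 's) \<Rightarrow> gseq \<Rightarrow> (nat \<Rightarrow> 'v) \<Rightarrow> nat \<Rightarrow> nat \<Rightarrow> 's" where
  "run n init msg tr G inp 0 = (\<lambda>p. init p (inp p))"
| "run n init msg tr G inp (Suc r) =
     (\<lambda>p. tr p (run n init msg tr G inp r p)
            (\<lambda>q. if q < n \<and> (q, p) \<in> G (Suc r)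
                 then Some (msg q (run n init msg tr G inp r q) p) else None))"

(* decisions are irrevocable: p decides v if the first round at which its
   decision output is defined yields v *)
definition decides :: "(nat \<Rightarrow> 's \<Rightarrow> 'v option) \<Rightarrow> (nat \<Rightarrow> nat \<Rightarrow> 's) \<Rightarrow> nat \<Rightarrow> 'v \<Rightarrow> bool" where
  "decides dec st p v \<longleftrightarrow>
     (\<exists>r. dec p (st r p) = Some v \<and> (\<forall>r'<r. dec p (st r' p) = None))"

definition solves_consensus :: "nat \<Rightarrow> gseq set \<Rightarrow> (nat \<Rightarrow> 'v \<Rightarrow> 's) \<Rightarrow> (nat \<Rightarrow> 's \<Rightarrow> nat \<Rightarrow> 'm)
   \<Rightarrow> (nat \<Rightarrow> 's \<Rightarrow> (nat \<Rightarrow> 'm option) \<Rightarrow> 's) \<Rightarrow> (nat \<Rightarrow> 's \<Rightarrow> 'v option) \<Rightarrow> bool" where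
  "solves_consensus n MA init msg tr dec \<longleftrightarrow>
     (\<forall>inp G. G \<in> MA \<longrightarrow>
        (let st = run n init msg tr G inp in
           (\<forall>p<n. \<exists>v. decides dec st p v)
         \<and> (\<forall>p<n. \<forall>q<n. \<forall>v w. decides dec st p v \<and> decides dec st q w \<longrightarrow> v = w)
         \<and> (\<forall>p<n. \<forall>v. decides dec st p v \<longrightarrow> v \<in> inp ` {..<n})))"

end

theory Submission
  imports Defs
begin


lemma closed_rtrancl:
  assumes "(q,p) \<in> g\<^sup>*" "p \<in> X" "\<forall>a b. (a,b) \<in> g \<and> b \<in> X \<longrightarrow> a \<in> X"
  shows "q \<in> X"
  using assms(1,2)
proof (induction rule: converse_rtrancl_induct)
  case base then show ?case by simp
next
  case (step y z) then show ?case using assms(3) by blast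
qed

lemma root_gen:
  assumes g: "g \<subseteq> {..<n} \<times> {..<n}" and ne: "R \<noteq> {}" and Rn: "R \<subseteq> {..<n}"
    and cl: "\<forall>p q. (p,q)\<in>g \<and> q\<in>R \<longrightarrow> p\<in>R"
    and sc: "\<forall>p\<in>R. \<forall>q\<in>R. (p,q) \<in> g\<^sup>*"
    and rch: "\<forall>q<n. \<exists>r\<in>R. (r,q)\<in>g\<^sup>*"
  shows "is_root_comp n g S \<longleftrightarrow> S = R"
proof
  have scc: "{q. (p, q) \<in> g\<^sup>* \<and> (q, p) \<in> g\<^sup>*} = R" if "p \<in> R" for p
  proof
    show "{q. (p, q) \<in> g\<^sup>* \<and> (q, p) \<in> g\<^sup>*} \<subseteq> R"
      using closed_rtrancl[of _ p g R] that cl by blast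
    show "R \<subseteq> {q. (p, q) \<in> g\<^sup>* \<and> (q, p) \<in> g\<^sup>*}" using sc that by blast
  qed
  show "S = R \<Longrightarrow> is_root_comp n g S"
    unfolding is_root_comp_def using ne Rn cl scc by blast
  assume S: "is_root_comp n g S"
  then obtain p where pS: "p \<in> S" and Seq: "S = {q. (p, q) \<in> g\<^sup>* \<and> (q, p) \<in> g\<^sup>*}"
    and Sn: "S \<subseteq> {..<n}" and clS: "\<forall>a b. (a,b)\<in>g \<and> b\<in>S \<longrightarrow> a\<in>S"
    unfolding is_root_comp_def by blast
  have "p < n" using pS Sn by auto
  then obtain r where r: "r \<in> R" "(r,p) \<in> g\<^sup>*" using rch by blast
  have "r \<in> S" using closed_rtrancl[OF r(2) pS clS] .
  then have "(p,r) \<in> g\<^sup>*" using Seq by auto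
  then have "p \<in> R" using closed_rtrancl[of p r g R] r(1) cl by blast
  then show "S = R" using Seq scc by blast
qed

lemma root_gen2:
  assumes "g \<subseteq> {..<n} \<times> {..<n}" "R \<noteq> {}" "R \<subseteq> {..<n}"
    "\<forall>p q. (p,q)\<in>g \<and> q\<in>R \<longrightarrow> p\<in>R"
    "\<forall>p\<in>R. \<forall>q\<in>R. (p,q) \<in> g\<^sup>*"
    "\<forall>q<n. \<exists>r\<in>R. (r,q)\<in>g\<^sup>*"
  shows "rooted n g \<and> Root n g = R"
proof -
  have "is_root_comp n g = (\<lambda>S. S = R)" using root_gen[OF assms] by blast
  then show ?thesis unfolding rooted_def Root_def by auto
qed



locale LL = fixes n D :: nat assumes D1: "1 \<le> D" and Dn: "D < n"
begin

definition pi :: "nat \<Rightarrow> nat \<Rightarrow> nat \<Rightarrow> nat" where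
  "pi a b i = (if i = 0 then a else if i = 1 then b else i)"
definition ab :: "nat \<Rightarrow> nat \<Rightarrow> bool" where
  "ab a b \<longleftrightarrow> (a = 0 \<and> b = 1) \<or> (a = 1 \<and> b = 0)"
definition Lg :: "nat \<Rightarrow> nat \<Rightarrow> graph" where
  "Lg a b = {(pi a b i, pi a b (Suc i)) | i. i < D} \<union> {(a,e) | e. D < e \<and> e < n} \<union> {(p,p) | p. p < n}"
definition Mg :: "nat \<Rightarrow> nat \<Rightarrow> graph" where
  "Mg a b = Lg a b \<union> {(b,a)} \<union> {(b,e) | e. D < e \<and> e < n}"
definition Kg :: "nat set \<Rightarrow> graph" where
  "Kg R = {(r,p). r \<in> R \<and> p < n} \<union> {(p,p) | p. p < n}"

lemma pi0[simp]: "pi a b 0 = a" and pi1[simp]: "pi a b (Suc 0) = b"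
  by (auto simp: pi_def)

lemma pi_le: "ab a b \<Longrightarrow> i \<le> D \<Longrightarrow> pi a b i \<le> D"
  using D1 by (auto simp: pi_def ab_def)

lemma pi_lt: "ab a b \<Longrightarrow> i \<le> D \<Longrightarrow> pi a b i < n"
  using pi_le Dn by fastforce

lemma pi_inj: "ab a b \<Longrightarrow> pi a b i = pi a b j \<Longrightarrow> i = j"
  by (auto simp: pi_def ab_def split: if_splits)

lemma pi_surj: "ab a b \<Longrightarrow> p \<le> D \<Longrightarrow> \<exists>i\<le>D. pi a b i = p"
proof -
  assume ab: "ab a b" and p: "p \<le> D"
  show ?thesis
  proof (cases "p = a")
    case True then show ?thesis by (intro exI[of _ 0]) simp
  next
    case False
    show ?thesis
    proof (cases "p = b")
      case True then show ?thesis using D1 by (intro exI[of _ 1]) simp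
    next
      case False2: False
      then have "p \<ge> 2" using False ab by (auto simp: ab_def)
      then show ?thesis using p False False2 by (intro exI[of _ p]) (auto simp: pi_def)
    qed
  qed
qed

lemma ab_le: "ab a b \<Longrightarrow> a \<le> 1 \<and> b \<le> 1 \<and> a \<noteq> b" by (auto simp: ab_def)

lemma Lg_sub: "ab a b \<Longrightarrow> Lg a b \<subseteq> {..<n} \<times> {..<n}"
  using pi_lt[of a b] ab_le[of a b] D1 Dn unfolding Lg_def by fastforce

lemma Mg_sub: "ab a b \<Longrightarrow> Mg a b \<subseteq> {..<n} \<times> {..<n}"
  using Lg_sub[of a b] ab_le[of a b] D1 Dn unfolding Mg_def by fastforce

lemma Kg_sub: "R \<subseteq> {..<n} \<Longrightarrow> Kg R \<subseteq> {..<n} \<times> {..<n}"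
  unfolding Kg_def by auto

lemma line_reach:
  assumes "\<forall>i<D. (pi a b i, pi a b (Suc i)) \<in> g"
  shows "j \<le> i \<Longrightarrow> i \<le> D \<Longrightarrow> (pi a b j, pi a b i) \<in> g\<^sup>*"
proof (induction i)
  case 0 then show ?case by simp
next
  case (Suc i)
  show ?case
  proof (cases "j = Suc i")
    case True then show ?thesis by simp
  next
    case False
    then have "(pi a b j, pi a b i) \<in> g\<^sup>*" using Suc by simp
    moreover have "(pi a b i, pi a b (Suc i)) \<in> g" using assms Suc by simp
    ultimately show ?thesis by simp
  qed
qed

lemma Lg_line: "\<forall>i<D. (pi a b i, pi a b (Suc i)) \<in> Lg a b"
  unfolding Lg_def by blast

lemma Mg_line: "\<forall>i<D. (pi a b i, pi a b (Suc i)) \<in> Mg a b"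
  unfolding Lg_def Mg_def by blast

lemma Lg_root: assumes "ab a b" shows "rooted n (Lg a b) \<and> Root n (Lg a b) = {a}"
proof (rule root_gen2[OF Lg_sub[OF assms]])
  show "{a} \<subseteq> {..<n}" using ab_le[OF assms] Dn D1 by auto
  show "\<forall>p q. (p, q) \<in> Lg a b \<and> q \<in> {a} \<longrightarrow> p \<in> {a}"
  proof (intro allI impI)
    fix p q assume h: "(p, q) \<in> Lg a b \<and> q \<in> {a}"
    { fix i assume "i < D" "(p,q) = (pi a b i, pi a b (Suc i))"
      then have "pi a b (Suc i) = pi a b 0" using h by simp
      then have False using pi_inj[OF assms] by blast }
    then show "p \<in> {a}" using h ab_le[OF assms] D1 unfolding Lg_def by auto
  qed
  show "\<forall>q<n. \<exists>r\<in>{a}. (r, q) \<in> (Lg a b)\<^sup>*"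
  proof (intro allI impI)
    fix q assume q: "q < n"
    show "\<exists>r\<in>{a}. (r, q) \<in> (Lg a b)\<^sup>*"
    proof (cases "q \<le> D")
      case True
      then obtain i where "i \<le> D" "pi a b i = q" using pi_surj[OF assms] by blast
      then show ?thesis using line_reach[OF Lg_line, of 0 i] by auto
    next
      case False
      then have "(a,q) \<in> Lg a b" using q unfolding Lg_def by auto
      then show ?thesis by blast
    qed
  qed
qed auto

lemma Mg_root: assumes "ab a b" shows "rooted n (Mg a b) \<and> Root n (Mg a b) = {a,b}"
proof (rule root_gen2[OF Mg_sub[OF assms]])
  show "{a,b} \<subseteq> {..<n}" using ab_le[OF assms] Dn D1 by auto
  show "\<forall>p q. (p, q) \<in> Mg a b \<and> q \<in> {a,b} \<longrightarrow> p \<in> {a,b}"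
  proof (intro allI impI)
    fix p q assume h: "(p, q) \<in> Mg a b \<and> q \<in> {a,b}"
    { fix i assume i: "i < D" "(p,q) = (pi a b i, pi a b (Suc i))"
      then have "pi a b (Suc i) = pi a b 0 \<or> pi a b (Suc i) = pi a b 1" using h by auto
      then have "Suc i = 1" using pi_inj[OF assms] by blast
      then have "p = a" using i by simp }
    then show "p \<in> {a,b}" using h ab_le[OF assms] D1 unfolding Lg_def Mg_def by auto
  qed
  show "\<forall>p\<in>{a,b}. \<forall>q\<in>{a,b}. (p, q) \<in> (Mg a b)\<^sup>*"
  proof -
    have "(a,b) \<in> Mg a b" using Mg_line[of a b] D1 by (metis One_nat_def less_le_trans pi0 pi1 zero_less_one)
    moreover have "(b,a) \<in> Mg a b" unfolding Mg_def by blast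
    ultimately show ?thesis by auto
  qed
  show "\<forall>q<n. \<exists>r\<in>{a,b}. (r, q) \<in> (Mg a b)\<^sup>*"
  proof (intro allI impI)
    fix q assume q: "q < n"
    show "\<exists>r\<in>{a,b}. (r, q) \<in> (Mg a b)\<^sup>*"
    proof (cases "q \<le> D")
      case True
      then obtain i where "i \<le> D" "pi a b i = q" using pi_surj[OF assms] by blast
      then show ?thesis using line_reach[OF Mg_line, of 0 i] by auto
    next
      case False
      then have "(a,q) \<in> Mg a b" using q unfolding Lg_def Mg_def by auto
      then show ?thesis by blast
    qed
  qed
qed auto

lemma Kg_root: assumes "R \<noteq> {}" "R \<subseteq> {..<n}" shows "rooted n (Kg R) \<and> Root n (Kg R) = R"
proof (rule root_gen2[OF Kg_sub[OF assms(2)] assms])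
  show "\<forall>p q. (p, q) \<in> Kg R \<and> q \<in> R \<longrightarrow> p \<in> R" unfolding Kg_def by auto
  show "\<forall>p\<in>R. \<forall>q\<in>R. (p, q) \<in> (Kg R)\<^sup>*" using assms(2) unfolding Kg_def by blast
  show "\<forall>q<n. \<exists>r\<in>R. (r, q) \<in> (Kg R)\<^sup>*" using assms(1) unfolding Kg_def by blast
qed

end


lemma C_step: "a \<le> b \<Longrightarrow> (q,p) \<in> compound G a b \<Longrightarrow> (p,p') \<in> G (Suc b) \<Longrightarrow> (q,p') \<in> compound G a (Suc b)"
  by auto

lemma C_self: "valid_seq n G \<Longrightarrow> q < n \<Longrightarrow> a \<le> b \<Longrightarrow> (q,q) \<in> compound G a b"
proof (induction b)
  case 0 then show ?case by simp
next
  case (Suc b)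
  show ?case
  proof (cases "Suc b \<le> a")
    case True then show ?thesis by simp
  next
    case False
    then have "(q,q) \<in> compound G a b" using Suc by simp
    moreover have "(q,q) \<in> G (Suc b)" using Suc.prems unfolding valid_seq_def is_graph_def by auto
    ultimately show ?thesis using False by auto
  qed
qed

lemma C_ext: "valid_seq n G \<Longrightarrow> p < n \<Longrightarrow> (q,p) \<in> compound G a b \<Longrightarrow> a \<le> b \<Longrightarrow> b \<le> c \<Longrightarrow> (q,p) \<in> compound G a c"
proof (induction c)
  case 0 then show ?case by simp
next
  case (Suc c)
  show ?case
  proof (cases "b = Suc c")
    case True then show ?thesis using Suc by simp
  next
    case False
    then have "(q,p) \<in> compound G a c" using Suc by simp
    moreover have "(p,p) \<in> G (Suc c)" using Suc.prems unfolding valid_seq_def is_graph_def by auto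
    ultimately show ?thesis using Suc.prems False by auto
  qed
qed

lemma C_edge: "valid_seq n G \<Longrightarrow> r < n \<Longrightarrow> p < n \<Longrightarrow> a < s \<Longrightarrow> s \<le> b \<Longrightarrow> (r,p) \<in> G s \<Longrightarrow> (r,p) \<in> compound G a b"
proof -
  assume v: "valid_seq n G" and r: "r < n" and p: "p < n" and as: "a < s" and sb: "s \<le> b" and e: "(r,p) \<in> G s"
  obtain s' where s': "s = Suc s'" using as by (cases s) auto
  have "(r,r) \<in> compound G a s'" using C_self[OF v r] as s' by simp
  then have "(r,p) \<in> compound G a s" using C_step[of a s' r r G p] as s' e by simp
  then show ?thesis using C_ext[OF v p] as sb by simp
qed

context LL
begin

definition pref_ok :: "graph \<Rightarrow> bool" where
  "pref_ok X \<longleftrightarrow> X \<in> {Lg 0 1, Lg 1 0, Mg 0 1, Mg 1 0}"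

definition okR :: "nat set \<Rightarrow> bool" where
  "okR R \<longleftrightarrow> R \<noteq> {} \<and> R \<subseteq> {..<n}"

definition inS :: "gseq \<Rightarrow> bool" where
  "inS G \<longleftrightarrow> (\<exists>X. pref_ok X \<and> (\<forall>r. 1 \<le> r \<and> r \<le> D \<longrightarrow> G r = X))
     \<and> (\<forall>r>D. \<exists>R. okR R \<and> G r = Kg R)"

lemma C_line:
  assumes "\<forall>r. 1 \<le> r \<and> r \<le> D \<longrightarrow> G r = X" "\<forall>i<D. (pi a b i, pi a b (Suc i)) \<in> X"
  shows "j \<le> i \<Longrightarrow> i \<le> D \<Longrightarrow> valid_seq n G \<Longrightarrow> ab a b \<Longrightarrow> (pi a b j, pi a b i) \<in> compound G 0 i"
proof (induction i)
  case 0 then show ?case by simp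
next
  case (Suc i)
  show ?case
  proof (cases "j = Suc i")
    case True then show ?thesis using C_self[of n G "pi a b j" 0 j] pi_lt Suc.prems by simp
  next
    case False
    then have "(pi a b j, pi a b i) \<in> compound G 0 i" using Suc by simp
    moreover have "(pi a b i, pi a b (Suc i)) \<in> G (Suc i)" using assms Suc.prems by simp
    ultimately show ?thesis using C_step[of 0 i] by blast
  qed
qed

lemma valid_inS: "inS G \<Longrightarrow> valid_seq n G"
proof -
  assume S: "inS G"
  then obtain X where X: "pref_ok X" "\<forall>r. 1 \<le> r \<and> r \<le> D \<longrightarrow> G r = X" unfolding inS_def by blast
  have gX: "is_graph n X"
  proof -
    have "ab 0 1" "ab 1 0" by (auto simp: ab_def)
    moreover have "\<forall>p<n. (p,p) \<in> Lg a b \<and> (p,p) \<in> Mg a b" for a b unfolding Mg_def Lg_def by blast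
    moreover have "is_graph n (Lg a b)" "is_graph n (Mg a b)" if "ab a b" for a b
      using Lg_sub[OF that] Mg_sub[OF that] unfolding is_graph_def Mg_def Lg_def by blast+
    ultimately show ?thesis using X(1) unfolding pref_ok_def by auto
  qed
  have "is_graph n (Kg R)" if "okR R" for R
    using that Kg_sub unfolding is_graph_def okR_def Kg_def by auto
  then show ?thesis unfolding valid_seq_def using S X gX unfolding inS_def
    by (metis not_le)
qed

lemma rooted_inS: "inS G \<Longrightarrow> r \<ge> 1 \<Longrightarrow> rooted n (G r)"
proof -
  assume S: "inS G" and r: "r \<ge> 1"
  then obtain X where X: "pref_ok X" "\<forall>r. 1 \<le> r \<and> r \<le> D \<longrightarrow> G r = X" unfolding inS_def by blast
  have "ab 0 1" "ab 1 0" by (auto simp: ab_def)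
  then have "rooted n X" using X(1) Lg_root Mg_root unfolding pref_ok_def by auto
  moreover have "rooted n (Kg R)" if "okR R" for R using Kg_root that unfolding okR_def by auto
  ultimately show ?thesis using S X r unfolding inS_def by (metis not_le)
qed

lemma prefix_diam:
  assumes v: "valid_seq n G" and GX: "\<forall>r. 1 \<le> r \<and> r \<le> D \<longrightarrow> G r = X" and X: "pref_ok X"
    and p: "p < n"
  shows "Root n X \<subseteq> CP G p 0 D"
proof -
  have L: "{a} \<subseteq> CP G p 0 D" if ab: "ab a b" and sub: "Lg a b \<subseteq> X" for a b
  proof -
    have line: "\<forall>i<D. (pi a b i, pi a b (Suc i)) \<in> X" using Lg_line[of a b] sub by blast
    show ?thesis
    proof (cases "p \<le> D")
      case True
      then obtain i where i: "i \<le> D" "pi a b i = p" using pi_surj[OF ab] by blast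
      have "(pi a b 0, pi a b i) \<in> compound G 0 i" using C_line[OF GX line, of 0 i] i v ab by simp
      then have "(a, p) \<in> compound G 0 D" using C_ext[OF v p, of a 0 i D] i by simp
      then show ?thesis unfolding CP_def by simp
    next
      case False
      then have "(a,p) \<in> X" using sub p unfolding Lg_def by auto
      then have "(a,p) \<in> compound G 0 D"
        using C_edge[OF v _ p, of a 0 1 D] GX D1 ab_le[OF ab] Dn by auto
      then show ?thesis unfolding CP_def by simp
    qed
  qed
  have M: "{b} \<subseteq> CP G p 0 D" if ab: "ab a b" and X: "X = Mg a b" for a b
  proof -
    have line: "\<forall>i<D. (pi a b i, pi a b (Suc i)) \<in> X" using Mg_line[of a b] X by blast
    have bn: "b < n" using ab_le[OF ab] D1 Dn by auto
    show ?thesis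
    proof (cases "p \<le> D")
      case True
      then obtain i where i: "i \<le> D" "pi a b i = p" using pi_surj[OF ab] by blast
      show ?thesis
      proof (cases "i = 0")
        case True
        then have "(b,p) \<in> X" using X i unfolding Mg_def by simp
        then have "(b,p) \<in> compound G 0 D"
          using C_edge[OF v bn p, of 0 1 D] GX D1 by auto
        then show ?thesis unfolding CP_def by simp
      next
        case False
        have "(pi a b 1, pi a b i) \<in> compound G 0 i" using C_line[OF GX line, of 1 i] i v ab False by simp
        then have "(b, p) \<in> compound G 0 D" using C_ext[OF v p, of b 0 i D] i by simp
        then show ?thesis unfolding CP_def by simp
      qed
    next
      case False
      then have "(b,p) \<in> X" using X p unfolding Mg_def by auto
      then have "(b,p) \<in> compound G 0 D"
        using C_edge[OF v bn p, of 0 1 D] GX D1 by auto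
      then show ?thesis unfolding CP_def by simp
    qed
  qed
  have a01: "ab 0 1" "ab 1 0" by (auto simp: ab_def)
  have "Lg a b \<subseteq> Mg a b" for a b unfolding Mg_def by blast
  then show ?thesis using X a01 L M Lg_root Mg_root unfolding pref_ok_def
    by (auto simp del: One_nat_def) 
qed

end


context LL
begin

lemma pref_root: "pref_ok X \<Longrightarrow> rooted n X \<and> Root n X \<subseteq> {..<n}"
proof -
  assume X: "pref_ok X"
  have a01: "ab 0 1" "ab 1 0" by (auto simp: ab_def)
  have "{0,1} \<subseteq> {..<n}" using D1 Dn by auto
  then show ?thesis using X a01 Lg_root Mg_root unfolding pref_ok_def by auto
qed

lemma inS_adm:
  assumes S: "inS G" and x: "1 \<le> x" "x \<le> D"
  shows "G \<in> EV_STABLE_init n D x"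
proof -
  obtain X where X: "pref_ok X" "\<forall>r. 1 \<le> r \<and> r \<le> D \<longrightarrow> G r = X" using S unfolding inS_def by blast
  have v: "valid_seq n G" using valid_inS[OF S] .
  have RX: "rooted n X" "Root n X \<subseteq> {..<n}" using pref_root[OF X(1)] by auto
  have init: "R_rooted n G (Root n X) 1 D" unfolding R_rooted_def using X(2) RX D1 by auto
  have stab: "R_rooted n G (Root n X) 1 (1 + x - 1)" unfolding R_rooted_def using X(2) RX x by auto
  have rooted: "G \<in> ROOTED n" using rooted_inS[OF S] unfolding ROOTED_def by auto
  have diam: "G \<in> DIAM n D"
    unfolding DIAM_def
  proof (intro CollectI allI impI ballI)
    fix r1 R p
    assume r1: "1 \<le> r1" and RR: "R_rooted n G R r1 (r1 + D - 1)" and p: "p < n"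
    show "R \<subseteq> CP G p (r1 - 1) (r1 + D - 1)"
    proof (cases "r1 = 1")
      case True
      then have "R = Root n X" using RR X(2) D1 unfolding R_rooted_def by auto
      then show ?thesis using prefix_diam[OF v X(2) X(1) p] True by simp
    next
      case False
      define s where "s = r1 + D - 1"
      have sD: "s > D" using False r1 D1 unfolding s_def by simp
      obtain R' where R': "okR R'" "G s = Kg R'" using S sD unfolding inS_def by blast
      have "Root n (G s) = R" using RR D1 unfolding R_rooted_def s_def by auto
      then have RR': "R = R'" using Kg_root R' unfolding okR_def by auto
      show ?thesis
      proof
        fix r assume r: "r \<in> R"
        have rn: "r < n" using r RR' R' unfolding okR_def by auto
        have "(r,p) \<in> G s" using R' RR' r p unfolding Kg_def by auto
        then have "(r,p) \<in> compound G (r1 - 1) s"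
          using C_edge[OF v rn p, of "r1 - 1" s s] r1 D1 unfolding s_def by auto
        then show "r \<in> CP G p (r1 - 1) (r1 + D - 1)" unfolding CP_def s_def by simp
      qed
    qed
  qed
  have "G \<in> EV_STABLE n D x"
    unfolding EV_STABLE_def EV_STABILITY_def using v rooted diam stab RX by blast
  then show ?thesis unfolding EV_STABLE_init_def using init RX by blast
qed

end


lemma run_agree: "(\<forall>r. 1 \<le> r \<and> r \<le> t \<longrightarrow> G r = G' r) \<Longrightarrow>
   run n init msg tr G inp t = run n init msg tr G' inp t"
proof (induction t)
  case 0 then show ?case by simp
next
  case (Suc t)
  then have e: "run n init msg tr G inp t = run n init msg tr G' inp t" by simp
  have g: "G (Suc t) = G' (Suc t)" using Suc.prems by simp
  show ?case by (simp only: run.simps e g)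
qed

lemma run_step_eq:
  assumes "\<forall>q<n. ((q,p)\<in>G (Suc t) \<longleftrightarrow> (q,p) \<in> G' (Suc t)) \<and>
              ((q,p) \<in> G (Suc t) \<longrightarrow> run n init msg tr G inp t q = run n init msg tr G' inp' t q)"
    and "run n init msg tr G inp t p = run n init msg tr G' inp' t p"
  shows "run n init msg tr G inp (Suc t) p = run n init msg tr G' inp' (Suc t) p"
proof -
  have "(\<lambda>q. if q < n \<and> (q, p) \<in> G (Suc t) then Some (msg q (run n init msg tr G inp t q) p) else None)
      = (\<lambda>q. if q < n \<and> (q, p) \<in> G' (Suc t) then Some (msg q (run n init msg tr G' inp' t q) p) else None)"
    using assms(1) by (intro ext) auto
  then show ?thesis using assms(2) by simp
qed

lemma run_local:
  assumes cl: "\<forall>s>t. \<forall>p\<in>W. \<forall>q<n. ((q,p)\<in>G s \<longleftrightarrow> (q,p)\<in>G' s) \<and> ((q,p)\<in>G s \<longrightarrow> q\<in>W)"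
    and eq: "\<forall>p\<in>W. run n init msg tr G inp t p = run n init msg tr G' inp' t p"
  shows "\<forall>p\<in>W. run n init msg tr G inp (t + k) p = run n init msg tr G' inp' (t + k) p"
proof (induction k)
  case 0 then show ?case using eq by simp
next
  case (Suc k)
  show ?case
  proof
    fix p assume p: "p \<in> W"
    have "run n init msg tr G inp (Suc (t + k)) p = run n init msg tr G' inp' (Suc (t + k)) p"
    proof (rule run_step_eq)
      show "\<forall>q<n. ((q, p) \<in> G (Suc (t + k))) = ((q, p) \<in> G' (Suc (t + k))) \<and>
        ((q, p) \<in> G (Suc (t + k)) \<longrightarrow> run n init msg tr G inp (t + k) q = run n init msg tr G' inp' (t + k) q)"
      proof (intro allI impI conjI)
        fix q assume q: "q < n"
        have c: "((q,p)\<in>G (Suc (t+k)) \<longleftrightarrow> (q,p)\<in>G' (Suc (t+k))) \<and> ((q,p)\<in>G (Suc (t+k)) \<longrightarrow> q\<in>W)"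
          using cl[rule_format, of "Suc (t+k)" p q] p q by simp
        then show "((q, p) \<in> G (Suc (t + k))) = ((q, p) \<in> G' (Suc (t + k)))" by simp
        assume "(q, p) \<in> G (Suc (t + k))"
        then have "q \<in> W" using c by simp
        then show "run n init msg tr G inp (t + k) q = run n init msg tr G' inp' (t + k) q" using Suc.IH by simp
      qed
      show "run n init msg tr G inp (t + k) p = run n init msg tr G' inp' (t + k) p" using Suc.IH p by simp
    qed
    then show "run n init msg tr G inp (t + Suc k) p = run n init msg tr G' inp' (t + Suc k) p" by simp
  qed
qed

lemma run_local':
  assumes "\<forall>s>t. \<forall>p\<in>W. \<forall>q<n. ((q,p)\<in>G s \<longleftrightarrow> (q,p)\<in>G' s) \<and> ((q,p)\<in>G s \<longrightarrow> q\<in>W)"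
    and "\<forall>p\<in>W. run n init msg tr G inp t p = run n init msg tr G' inp' t p"
    and "t \<le> s" and "p \<in> W"
  shows "run n init msg tr G inp s p = run n init msg tr G' inp' s p"
  using run_local[OF assms(1,2), of "s - t"] assms(3,4) by simp

lemma dec_same: "(\<forall>r. st r p = st' r p) \<Longrightarrow> decides dec st p v = decides dec st' p v"
  unfolding decides_def by simp

lemma dec_prefix: "decides dec st p v \<Longrightarrow> \<exists>r0. \<forall>st'. (\<forall>r\<le>r0. st' r p = st r p) \<longrightarrow> decides dec st' p v"
  unfolding decides_def by (metis less_imp_le order_refl)

context LL
begin

lemma Lg_in_a: "ab a b \<Longrightarrow> (q,a) \<in> Lg a b \<Longrightarrow> q = a"
proof -
  assume ab: "ab a b" and h: "(q,a) \<in> Lg a b"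
  { fix i assume "i < D" "(q,a) = (pi a b i, pi a b (Suc i))"
    then have "pi a b (Suc i) = pi a b 0" by simp
    then have False using pi_inj[OF ab] by blast }
  then show ?thesis using h ab_le[OF ab] D1 unfolding Lg_def by auto
qed

lemma Lg_aa: "ab a b \<Longrightarrow> (a,a) \<in> Lg a b"
  using ab_le[of a b] D1 Dn unfolding Lg_def by auto

lemma Mg_in01: "ab a b \<Longrightarrow> p \<in> {0,1} \<Longrightarrow> q < n \<Longrightarrow> (q,p) \<in> Mg a b \<longleftrightarrow> q \<in> {0,1}"
proof -
  assume ab: "ab a b" and p: "p \<in> {0,1}" and q: "q < n"
  have pab: "p = a \<or> p = b" "q \<in> {0,1} \<longleftrightarrow> q = a \<or> q = b" using ab p by (auto simp: ab_def)
  have e1: "(a,b) \<in> Mg a b" using Mg_line[of a b] D1 by (metis One_nat_def less_le_trans pi0 pi1 zero_less_one)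
  have e2: "(b,a) \<in> Mg a b" unfolding Mg_def by blast
  have e3: "(a,a) \<in> Mg a b" "(b,b) \<in> Mg a b" using ab_le[OF ab] D1 Dn unfolding Mg_def Lg_def by auto
  show ?thesis
  proof
    assume h: "(q,p) \<in> Mg a b"
    { fix i assume i: "i < D" "(q,p) = (pi a b i, pi a b (Suc i))"
      then have "pi a b (Suc i) = pi a b 0 \<or> pi a b (Suc i) = pi a b 1" using pab by auto
      then have "Suc i = 1" using pi_inj[OF ab] by blast
      then have "q = a" using i by simp }
    then show "q \<in> {0,1}" using h pab ab_le[OF ab] D1 unfolding Lg_def Mg_def by auto
  next
    assume "q \<in> {0,1}"
    then have "q = a \<or> q = b" using pab(2) by simp
    then show "(q,p) \<in> Mg a b" using pab(1) e1 e2 e3 by blast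
  qed
qed

lemma line_in:
  assumes ab: "ab a b" and i: "1 \<le> i" "i \<le> D" and q: "q < n" and X: "X = Lg a b \<or> X = Mg a b"
  shows "(q, pi a b i) \<in> X \<longleftrightarrow> q = pi a b i \<or> q = pi a b (i - 1)"
proof
  have le: "pi a b i \<le> D" using pi_le[OF ab i(2)] .
  assume h: "(q, pi a b i) \<in> X"
  { fix j assume j: "j < D" "(q, pi a b i) = (pi a b j, pi a b (Suc j))"
    then have "Suc j = i" using pi_inj[OF ab] by auto
    then have "q = pi a b (i - 1)" using j by auto }
  moreover have "pi a b i \<noteq> a" using pi_inj[OF ab, of i 0] i by auto
  moreover have "\<not> D < pi a b i" using le by simp
  moreover have "(q, pi a b i) \<in> Mg a b" using h X unfolding Mg_def by blast
  ultimately show "q = pi a b i \<or> q = pi a b (i - 1)" unfolding Lg_def Mg_def by blast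
next
  assume "q = pi a b i \<or> q = pi a b (i - 1)"
  moreover have "(pi a b i, pi a b i) \<in> Lg a b" using pi_lt[OF ab i(2)] unfolding Lg_def by blast
  moreover have "(pi a b (i - 1), pi a b i) \<in> Lg a b"
  proof -
    obtain j where j: "i = Suc j" using i by (cases i) auto
    then have "j < D" using i by simp
    then show ?thesis using Lg_line[of a b] j by simp
  qed
  moreover have "Lg a b \<subseteq> Mg a b" unfolding Mg_def by blast
  ultimately show "(q, pi a b i) \<in> X" using X by blast
qed

lemma Kg_in: "p < n \<Longrightarrow> (q,p) \<in> Kg R \<longleftrightarrow> q \<in> R \<or> q = p"
  unfolding Kg_def by auto

lemma inS_pre: "pref_ok X \<Longrightarrow> okR R \<Longrightarrow> inS (\<lambda>r. if r \<le> D then X else Kg R)"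
  unfolding inS_def by auto

end


locale Alg = LL n D for n D +
  fixes init :: "nat \<Rightarrow> 'v \<Rightarrow> 's" and msg :: "nat \<Rightarrow> 's \<Rightarrow> nat \<Rightarrow> 'm"
    and tr :: "nat \<Rightarrow> 's \<Rightarrow> (nat \<Rightarrow> 'm option) \<Rightarrow> 's" and dec :: "nat \<Rightarrow> 's \<Rightarrow> 'v option"
    and x :: nat and v0 v1 :: 'v
  assumes x1: "1 \<le> x" and xD: "x \<le> D" and vne: "v0 \<noteq> v1"
    and sol: "solves_consensus n (EV_STABLE_init n D x) init msg tr dec"
begin

definition inp :: "nat \<Rightarrow> 'v" where "inp p = (if p = 0 then v0 else v1)"

abbreviation st :: "gseq \<Rightarrow> nat \<Rightarrow> nat \<Rightarrow> 's" where
  "st G \<equiv> run n init msg tr G inp"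

lemma termi: "inS G \<Longrightarrow> p < n \<Longrightarrow> \<exists>v. decides dec (run n init msg tr G i) p v"
  using sol inS_adm[OF _ x1 xD] unfolding solves_consensus_def Let_def by blast

lemma agr: "inS G \<Longrightarrow> p < n \<Longrightarrow> q < n \<Longrightarrow> decides dec (st G) p v \<Longrightarrow> decides dec (st G) q w \<Longrightarrow> v = w"
  using sol inS_adm[OF _ x1 xD] unfolding solves_consensus_def Let_def by blast

lemma valid: "inS G \<Longrightarrow> p < n \<Longrightarrow> decides dec (run n init msg tr G i) p v \<Longrightarrow> v \<in> i ` {..<n}"
  using sol inS_adm[OF _ x1 xD] unfolding solves_consensus_def Let_def by blast

definition Val :: "gseq \<Rightarrow> nat \<Rightarrow> 'v set" where
  "Val G t = {v. \<exists>G'. inS G' \<and> (\<forall>r. 1 \<le> r \<and> r \<le> t \<longrightarrow> G' r = G r) \<and> (\<exists>p<n. decides dec (st G') p v)}"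

definition biv :: "gseq \<Rightarrow> nat \<Rightarrow> bool" where
  "biv G t \<longleftrightarrow> (\<exists>v w. v \<noteq> w \<and> v \<in> Val G t \<and> w \<in> Val G t)"

lemma ValI: "inS G' \<Longrightarrow> \<forall>r. 1 \<le> r \<and> r \<le> t \<longrightarrow> G' r = G r \<Longrightarrow> p < n \<Longrightarrow> decides dec (st G') p v \<Longrightarrow> v \<in> Val G t"
  unfolding Val_def by blast

lemma univ: "\<not> biv G t \<Longrightarrow> v \<in> Val G t \<Longrightarrow> w \<in> Val G t \<Longrightarrow> v = w"
  unfolding biv_def by blast

lemma val_root:
  assumes ab: "ab a b"
  shows "decides dec (st (\<lambda>r. if r \<le> D then Lg a b else Kg {a})) a (inp a)"
proof -
  define G where "G = (\<lambda>r. if r \<le> D then Lg a b else Kg {a})"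
  define i' where "i' = (\<lambda>_::nat. inp a)"
  have an: "a < n" using ab_le[OF ab] D1 Dn by auto
  have pa: "pref_ok (Lg a b)" using ab unfolding pref_ok_def ab_def by auto
  have S: "inS G" unfolding G_def using inS_pre[OF pa] an unfolding okR_def by auto
  have cl: "\<forall>s>0. \<forall>p\<in>{a}. \<forall>q<n. ((q,p)\<in>G s \<longleftrightarrow> (q,p)\<in>G s) \<and> ((q,p)\<in>G s \<longrightarrow> q\<in>{a})"
    using Lg_in_a[OF ab] Kg_in an unfolding G_def by auto
  have eq: "\<forall>s. run n init msg tr G inp s a = run n init msg tr G i' s a"
    using run_local'[OF cl, of init msg tr inp i'] unfolding i'_def by simp
  obtain v where v: "decides dec (run n init msg tr G i') a v" using termi[OF S an] by blast
  have "v \<in> i' ` {..<n}" using valid[OF S an v] .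
  then have "v = inp a" unfolding i'_def by auto
  moreover have "decides dec (st G) a (inp a) = decides dec (run n init msg tr G i') a (inp a)"
    by (rule dec_same) (use eq in simp)
  ultimately show ?thesis using v unfolding G_def by simp
qed

lemma link_LM:
  assumes ab: "ab a b"
  shows "\<exists>z. decides dec (st (\<lambda>r. if r \<le> D then Lg a b else Kg {pi a b D})) (pi a b D) z
           \<and> decides dec (st (\<lambda>r. if r \<le> D then Mg a b else Kg {pi a b D})) (pi a b D) z"
proof -
  define w where "w = pi a b D"
  define H1 where "H1 = (\<lambda>r. if r \<le> D then Lg a b else Kg {w})"
  define H2 where "H2 = (\<lambda>r. if r \<le> D then Mg a b else Kg {w})"
  have wn: "w < n" unfolding w_def using pi_lt[OF ab] by simp
  have pa: "pref_ok (Lg a b)" using ab unfolding pref_ok_def ab_def by auto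
  have S: "inS H1" unfolding H1_def using inS_pre[OF pa] wn unfolding okR_def by auto
  have cont: "\<forall>t\<le>D. \<forall>i. t \<le> i \<and> i \<le> D \<longrightarrow> st H1 t (pi a b i) = st H2 t (pi a b i)"
  proof (intro allI)
    fix t show "t \<le> D \<longrightarrow> (\<forall>i. t \<le> i \<and> i \<le> D \<longrightarrow> st H1 t (pi a b i) = st H2 t (pi a b i))"
    proof (induction t)
      case 0 then show ?case by simp
    next
      case (Suc t)
      show ?case
      proof (intro impI allI)
        fix i assume t: "Suc t \<le> D" and i: "Suc t \<le> i \<and> i \<le> D"
        have IH: "\<forall>i. t \<le> i \<and> i \<le> D \<longrightarrow> st H1 t (pi a b i) = st H2 t (pi a b i)" using Suc.IH t by simp
        have g1: "H1 (Suc t) = Lg a b" "H2 (Suc t) = Mg a b" using t unfolding H1_def H2_def by auto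
        show "st H1 (Suc t) (pi a b i) = st H2 (Suc t) (pi a b i)"
        proof (rule run_step_eq)
          show "\<forall>q<n. ((q, pi a b i) \<in> H1 (Suc t)) = ((q, pi a b i) \<in> H2 (Suc t)) \<and>
             ((q, pi a b i) \<in> H1 (Suc t) \<longrightarrow> st H1 t q = st H2 t q)"
          proof (intro allI impI conjI)
            fix q assume q: "q < n"
            have i1: "1 \<le> i" using i by simp
            show "((q, pi a b i) \<in> H1 (Suc t)) = ((q, pi a b i) \<in> H2 (Suc t))"
              using line_in[OF ab i1 _ q, of "Lg a b"] line_in[OF ab i1 _ q, of "Mg a b"] i g1 by simp
            assume "(q, pi a b i) \<in> H1 (Suc t)"
            then have "q = pi a b i \<or> q = pi a b (i - 1)" using line_in[OF ab i1 _ q, of "Lg a b"] i g1 by simp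
            moreover have "st H1 t (pi a b (i - 1)) = st H2 t (pi a b (i - 1))"
            proof -
              have "t \<le> i - 1 \<and> i - 1 \<le> D" using i by auto
              then show ?thesis using IH by blast
            qed
            moreover have "st H1 t (pi a b i) = st H2 t (pi a b i)"
              using IH[rule_format, of "i"] i by simp
            ultimately show "st H1 t q = st H2 t q" by auto
          qed
          show "st H1 t (pi a b i) = st H2 t (pi a b i)" using IH i by simp
        qed
      qed
    qed
  qed
  have atD: "\<forall>p\<in>{w}. st H1 D p = st H2 D p" using cont unfolding w_def by simp
  have cl: "\<forall>s>D. \<forall>p\<in>{w}. \<forall>q<n. ((q,p)\<in>H1 s \<longleftrightarrow> (q,p)\<in>H2 s) \<and> ((q,p)\<in>H1 s \<longrightarrow> q\<in>{w})"
    using Kg_in wn unfolding H1_def H2_def by auto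
  have eq: "\<forall>s. st H1 s w = st H2 s w"
  proof
    fix s show "st H1 s w = st H2 s w"
    proof (cases "s \<le> D")
      case True then show ?thesis using cont unfolding w_def by simp
    next
      case False then show ?thesis using run_local'[OF cl atD, of s w] by simp
    qed
  qed
  obtain z where z: "decides dec (st H1) w z" using termi[OF S wn] by blast
  moreover have "decides dec (st H1) w z = decides dec (st H2) w z"
    by (rule dec_same) (use eq in simp)
  ultimately have "decides dec (st H2) w z" by simp
  then show ?thesis using z unfolding H1_def H2_def w_def by blast
qed

lemma link_MM:
  shows "\<exists>z. decides dec (st (\<lambda>r. if r \<le> D then Mg 0 1 else Kg {0})) 0 z
           \<and> decides dec (st (\<lambda>r. if r \<le> D then Mg 1 0 else Kg {0})) 0 z"
proof -
  define H1 where "H1 = (\<lambda>r. if r \<le> D then Mg 0 1 else Kg {0})"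
  define H2 where "H2 = (\<lambda>r. if r \<le> D then Mg 1 0 else Kg {0})"
  have n0: "0 < n" using Dn by simp
  have pa: "pref_ok (Mg 0 1)" unfolding pref_ok_def by auto
  have S: "inS H1" unfolding H1_def using inS_pre[OF pa] n0 unfolding okR_def by auto
  have a01: "ab 0 1" "ab 1 0" by (auto simp: ab_def)
  have cl: "\<forall>s>0. \<forall>p\<in>{0,1}. \<forall>q<n. ((q,p)\<in>H1 s \<longleftrightarrow> (q,p)\<in>H2 s) \<and> ((q,p)\<in>H1 s \<longrightarrow> q\<in>{0,1})"
  proof (intro allI impI ballI)
    fix s :: nat and p q assume s: "0 < s" and p: "p \<in> {0::nat,1}" and q: "q < n"
    have pn: "p < n" using p D1 Dn by auto
    show "((q,p)\<in>H1 s \<longleftrightarrow> (q,p)\<in>H2 s) \<and> ((q,p)\<in>H1 s \<longrightarrow> q\<in>{0,1})"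
    proof (cases "s \<le> D")
      case True then show ?thesis using Mg_in01[OF a01(1) p q] Mg_in01[OF a01(2) p q] unfolding H1_def H2_def by simp
    next
      case False then show ?thesis using Kg_in[OF pn] p unfolding H1_def H2_def by auto
    qed
  qed
  have eq: "\<forall>s. st H1 s 0 = st H2 s 0"
    using run_local'[OF cl, of init msg tr inp inp] by simp
  obtain z where z: "decides dec (st H1) 0 z" using termi[OF S n0] by blast
  moreover have "decides dec (st H1) 0 z = decides dec (st H2) 0 z"
    by (rule dec_same) (use eq in simp)
  ultimately have "decides dec (st H2) 0 z" by simp
  then show ?thesis using z unfolding H1_def H2_def by blast
qed

end


context Alg
begin

abbreviation pre :: "graph \<Rightarrow> gseq" where
  "pre X \<equiv> (\<lambda>r. if r \<le> D then X else Kg {0})"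

lemma Val_pre: "inS G \<Longrightarrow> \<forall>r. 1 \<le> r \<and> r \<le> D \<longrightarrow> G r = X \<Longrightarrow> p < n \<Longrightarrow> decides dec (st G) p v \<Longrightarrow> v \<in> Val (pre X) D"
  by (rule ValI) auto

lemma prefix_biv: "\<exists>X. pref_ok X \<and> biv (pre X) D"
proof (rule ccontr)
  assume "\<not> ?thesis"
  then have nb: "\<And>X. pref_ok X \<Longrightarrow> \<not> biv (pre X) D" by blast
  have a01: "ab 0 1" "ab 1 0" by (auto simp: ab_def)
  have p: "pref_ok (Lg 0 1)" "pref_ok (Lg 1 0)" "pref_ok (Mg 0 1)" "pref_ok (Mg 1 0)" unfolding pref_ok_def by auto
  have n01: "0 < n" "1 < n" using D1 Dn by auto
  have w1: "pi 0 1 D < n" "pi 1 0 D < n" using pi_lt a01 by auto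
  have S: "\<And>X R. pref_ok X \<Longrightarrow> okR R \<Longrightarrow> inS (\<lambda>r. if r \<le> D then X else Kg R)" using inS_pre by blast
  have ok: "okR {0}" "okR {1}" "okR {pi 0 1 D}" "okR {pi 1 0 D}" using n01 w1 unfolding okR_def by auto
  have A: "v0 \<in> Val (pre (Lg 0 1)) D"
    by (rule Val_pre[OF S[OF p(1) ok(1)] _ n01(1)]) (use val_root[OF a01(1)] in \<open>simp_all add: inp_def\<close>)
  have B: "v1 \<in> Val (pre (Lg 1 0)) D"
    by (rule Val_pre[OF S[OF p(2) ok(2)] _ n01(2)]) (use val_root[OF a01(2)] in \<open>simp_all add: inp_def\<close>)
  obtain z1 where zz1: "decides dec (st (\<lambda>r. if r \<le> D then Lg 0 1 else Kg {pi 0 1 D})) (pi 0 1 D) z1"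
      "decides dec (st (\<lambda>r. if r \<le> D then Mg 0 1 else Kg {pi 0 1 D})) (pi 0 1 D) z1"
    using link_LM[OF a01(1)] by blast
  have C1: "z1 \<in> Val (pre (Lg 0 1)) D" by (rule Val_pre[OF S[OF p(1) ok(3)] _ w1(1) zz1(1)]) simp
  have C2: "z1 \<in> Val (pre (Mg 0 1)) D" by (rule Val_pre[OF S[OF p(3) ok(3)] _ w1(1) zz1(2)]) simp
  obtain z2 where zz2: "decides dec (st (\<lambda>r. if r \<le> D then Mg 0 1 else Kg {0})) 0 z2"
      "decides dec (st (\<lambda>r. if r \<le> D then Mg 1 0 else Kg {0})) 0 z2"
    using link_MM by blast
  have D1': "z2 \<in> Val (pre (Mg 0 1)) D" by (rule Val_pre[OF S[OF p(3) ok(1)] _ n01(1) zz2(1)]) simp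
  have D2': "z2 \<in> Val (pre (Mg 1 0)) D" by (rule Val_pre[OF S[OF p(4) ok(1)] _ n01(1) zz2(2)]) simp
  obtain z3 where zz3: "decides dec (st (\<lambda>r. if r \<le> D then Lg 1 0 else Kg {pi 1 0 D})) (pi 1 0 D) z3"
      "decides dec (st (\<lambda>r. if r \<le> D then Mg 1 0 else Kg {pi 1 0 D})) (pi 1 0 D) z3"
    using link_LM[OF a01(2)] by blast
  have E1: "z3 \<in> Val (pre (Lg 1 0)) D" by (rule Val_pre[OF S[OF p(2) ok(4)] _ w1(2) zz3(1)]) simp
  have E2: "z3 \<in> Val (pre (Mg 1 0)) D" by (rule Val_pre[OF S[OF p(4) ok(4)] _ w1(2) zz3(2)]) simp
  have "v0 = z1" using univ[OF nb[OF p(1)] A C1] .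
  also have "z1 = z2" using univ[OF nb[OF p(3)] C2 D1'] .
  also have "z2 = z3" using univ[OF nb[OF p(4)] D2' E2] .
  also have "z3 = v1" using univ[OF nb[OF p(2)] E1 B] .
  finally have "v0 = v1" .
  then show False using vne by simp
qed

lemma free_step:
  assumes b: "biv G t" and tD: "D \<le> t"
  shows "\<exists>R. okR R \<and> biv (G(Suc t := Kg R)) (Suc t)"
proof (rule ccontr)
  assume "\<not> ?thesis"
  then have nb: "\<And>R. okR R \<Longrightarrow> \<not> biv (G(Suc t := Kg R)) (Suc t)" by blast
  define Vr where "Vr R = Val (G(Suc t := Kg R)) (Suc t)" for R
  obtain v w where vw: "v \<noteq> w" "v \<in> Val G t" "w \<in> Val G t" using b unfolding biv_def by blast
  obtain G0 where G0: "inS G0" "\<forall>r. 1 \<le> r \<and> r \<le> t \<longrightarrow> G0 r = G r" using vw(2) unfolding Val_def by blast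
  have ext: "\<exists>R. okR R \<and> u \<in> Vr R" if uV: "u \<in> Val G t" for u
  proof -
    obtain G1 p where G1: "inS G1" "\<forall>r. 1 \<le> r \<and> r \<le> t \<longrightarrow> G1 r = G r" "p < n" "decides dec (st G1) p u"
      using uV unfolding Val_def by blast
    have KK: "\<forall>r>D. \<exists>R. okR R \<and> G1 r = Kg R" using G1(1) unfolding inS_def by blast
    have "Suc t > D" using tD by simp
    then obtain R where R: "okR R" "G1 (Suc t) = Kg R" using KK by blast
    have ag: "\<forall>r. 1 \<le> r \<and> r \<le> Suc t \<longrightarrow> G1 r = (G(Suc t := Kg R)) r"
    proof (intro allI impI)
      fix r assume r: "1 \<le> r \<and> r \<le> Suc t"
      show "G1 r = (G(Suc t := Kg R)) r"
      proof (cases "r = Suc t")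
        case True then show ?thesis using R(2) by simp
      next
        case False then show ?thesis using G1(2) r by simp
      qed
    qed
    have "u \<in> Vr R" unfolding Vr_def by (rule ValI[OF G1(1) ag G1(3,4)])
    then show ?thesis using R(1) by blast
  qed
  have link: "\<exists>z. z \<in> Vr R \<and> z \<in> Vr (R \<union> {p})" if R: "okR R" and p: "p < n" for R p
  proof -
    define H1 where "H1 = (\<lambda>r. if r \<le> t then G0 r else if r = Suc t then Kg R else Kg {p})"
    define H2 where "H2 = (\<lambda>r. if r \<le> t then G0 r else if r = Suc t then Kg (R \<union> {p}) else Kg {p})"
    have okp: "okR {p}" "okR (R \<union> {p})" using R p unfolding okR_def by auto
    have h1: "H1 (Suc t) = Kg R" "H2 (Suc t) = Kg (R \<union> {p})" unfolding H1_def H2_def by simp_all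
    have h2: "\<And>s. s > Suc t \<Longrightarrow> H1 s = Kg {p} \<and> H2 s = Kg {p}" unfolding H1_def H2_def by simp
    have h3: "\<And>s. s \<le> t \<Longrightarrow> H1 s = G0 s \<and> H2 s = G0 s" unfolding H1_def H2_def by simp
    obtain X where X: "pref_ok X" "\<forall>r. 1 \<le> r \<and> r \<le> D \<longrightarrow> G0 r = X" using G0(1) unfolding inS_def by blast
    have K: "\<forall>r>D. \<exists>R. okR R \<and> G0 r = Kg R" using G0(1) unfolding inS_def by blast
    have Kall: "\<forall>r>D. \<exists>R. okR R \<and> H r = Kg R" if HH: "\<And>s. s \<le> t \<Longrightarrow> H s = G0 s"
      "H (Suc t) = Kg R'" "\<And>s. s > Suc t \<Longrightarrow> H s = Kg {p}" "okR R'" for H R'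
    proof (intro allI impI)
      fix r assume r: "D < r"
      show "\<exists>R. okR R \<and> H r = Kg R"
      proof (cases "r \<le> t")
        case True then show ?thesis using HH(1) K r by metis
      next
        case False
        then have "r = Suc t \<or> r > Suc t" by auto
        then show ?thesis using HH(2,3,4) okp(1) by blast
      qed
    qed
    have pre: "\<forall>r. 1 \<le> r \<and> r \<le> D \<longrightarrow> H1 r = X" "\<forall>r. 1 \<le> r \<and> r \<le> D \<longrightarrow> H2 r = X"
      using h3 X(2) tD by auto
    have k1: "\<forall>r>D. \<exists>R. okR R \<and> H1 r = Kg R"
    proof (rule Kall)
      show "\<And>s. s \<le> t \<Longrightarrow> H1 s = G0 s" using h3 by blast
      show "H1 (Suc t) = Kg R" by (rule h1(1))
      show "\<And>s. s > Suc t \<Longrightarrow> H1 s = Kg {p}" using h2 by blast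
      show "okR R" by (rule R)
    qed
    have k2: "\<forall>r>D. \<exists>R. okR R \<and> H2 r = Kg R"
    proof (rule Kall)
      show "\<And>s. s \<le> t \<Longrightarrow> H2 s = G0 s" using h3 by blast
      show "H2 (Suc t) = Kg (R \<union> {p})" by (rule h1(2))
      show "\<And>s. s > Suc t \<Longrightarrow> H2 s = Kg {p}" using h2 by blast
      show "okR (R \<union> {p})" by (rule okp(2))
    qed
    have inSH: "inS H1" "inS H2"
      unfolding inS_def using X(1) pre k1 k2 by blast+
    have at: "st H1 t = st H2 t" by (rule run_agree) (use h3 in simp)
    have s1: "st H1 (Suc t) p = st H2 (Suc t) p"
    proof (rule run_step_eq)
      show "\<forall>q<n. ((q, p) \<in> H1 (Suc t)) = ((q, p) \<in> H2 (Suc t)) \<and> ((q, p) \<in> H1 (Suc t) \<longrightarrow> st H1 t q = st H2 t q)"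
        unfolding h1 using Kg_in[OF p, of _ R] Kg_in[OF p, of _ "R \<union> {p}"] at by auto
      show "st H1 t p = st H2 t p" using at by simp
    qed
    have cl: "\<forall>s>Suc t. \<forall>p'\<in>{p}. \<forall>q<n. ((q,p')\<in>H1 s \<longleftrightarrow> (q,p')\<in>H2 s) \<and> ((q,p')\<in>H1 s \<longrightarrow> q\<in>{p})"
      using Kg_in[OF p] h2 by simp
    have eq: "\<forall>s. st H1 s p = st H2 s p"
    proof
      fix s show "st H1 s p = st H2 s p"
      proof (cases "s \<le> t")
        case True
        have "st H1 s = st H2 s" by (rule run_agree) (use True h3 in simp)
        then show ?thesis by simp
      next
        case False then show ?thesis using run_local'[OF cl, of init msg tr inp inp s p] s1 by simp
      qed
    qed
    obtain z where z: "decides dec (st H1) p z" using termi[OF inSH(1) p] by blast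
    moreover have "decides dec (st H1) p z = decides dec (st H2) p z"
      by (rule dec_same) (use eq in simp)
    ultimately have z2: "decides dec (st H2) p z" by simp
    have ag0: "H1 r = (G(Suc t := Kg R)) r \<and> H2 r = (G(Suc t := Kg (R \<union> {p}))) r"
      if r: "1 \<le> r" "r \<le> Suc t" for r
    proof (cases "r = Suc t")
      case True then show ?thesis using h1 by simp
    next
      case False then have "r \<le> t" using r by simp
      then show ?thesis using h3 G0(2) r False by simp
    qed
    have ag: "\<forall>r. 1 \<le> r \<and> r \<le> Suc t \<longrightarrow> H1 r = (G(Suc t := Kg R)) r"
      "\<forall>r. 1 \<le> r \<and> r \<le> Suc t \<longrightarrow> H2 r = (G(Suc t := Kg (R \<union> {p}))) r"
      using ag0 by blast+
    have "z \<in> Vr R" unfolding Vr_def by (rule ValI[OF inSH(1) ag(1) p z])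
    moreover have "z \<in> Vr (R \<union> {p})" unfolding Vr_def by (rule ValI[OF inSH(2) ag(2) p z2])
    ultimately show ?thesis by blast
  qed
  have un: "\<And>R a c. okR R \<Longrightarrow> a \<in> Vr R \<Longrightarrow> c \<in> Vr R \<Longrightarrow> a = c"
    using univ nb unfolding Vr_def by blast
  have n0: "0 < n" using D1 Dn by simp
  have down: "\<And>S z. okR S \<Longrightarrow> 0 \<in> S \<Longrightarrow> z \<in> Vr S \<Longrightarrow> z \<in> Vr {0}"
  proof -
    fix S z
    show "okR S \<Longrightarrow> 0 \<in> S \<Longrightarrow> z \<in> Vr S \<Longrightarrow> z \<in> Vr {0}"
    proof (induction "card S" arbitrary: S z rule: less_induct)
      case less
      show ?case
      proof (cases "S = {0}")
        case True then show ?thesis using less by simp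
      next
        case False
        then obtain p where p: "p \<in> S" "p \<noteq> 0" using less.prems(2) by blast
        define S' where "S' = S - {p}"
        have okS': "okR S'" "0 \<in> S'" using less.prems p unfolding okR_def S'_def by auto
        have fin: "finite S" using less.prems(1) unfolding okR_def using finite_subset by blast
        have cS: "card S' < card S" unfolding S'_def using fin p by (meson card_Diff1_less)
        have pn: "p < n" using p less.prems(1) unfolding okR_def by auto
        obtain z' where z': "z' \<in> Vr S'" "z' \<in> Vr (S' \<union> {p})" using link[OF okS'(1) pn] by blast
        have "S' \<union> {p} = S" unfolding S'_def using p by auto
        then have "z = z'" using un[OF less.prems(1) less.prems(3)] z'(2) by simp
        then show ?thesis using less.hyps[OF cS okS'] z'(1) by simp
      qed
    qed
  qed
  obtain R1 where R1: "okR R1" "v \<in> Vr R1" using ext[OF vw(2)] by blast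
  obtain R2 where R2: "okR R2" "w \<in> Vr R2" using ext[OF vw(3)] by blast
  obtain z1 where z1: "z1 \<in> Vr R1" "z1 \<in> Vr (R1 \<union> {0})" using link[OF R1(1) n0] by blast
  obtain z2 where z2: "z2 \<in> Vr R2" "z2 \<in> Vr (R2 \<union> {0})" using link[OF R2(1) n0] by blast
  have ok1: "okR (R1 \<union> {0})" "okR (R2 \<union> {0})" "okR {0}" using R1 R2 n0 unfolding okR_def by auto
  have "v = z1" using un[OF R1(1) R1(2) z1(1)] .
  moreover have "w = z2" using un[OF R2(1) R2(2) z2(1)] .
  moreover have "z1 \<in> Vr {0}" using down[OF ok1(1) _ z1(2)] by simp
  moreover have "z2 \<in> Vr {0}" using down[OF ok1(2) _ z2(2)] by simp
  ultimately have "v = w" using un[OF ok1(3)] by blast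
  then show False using vw(1) by simp
qed

end


context Alg
begin

lemma contradiction: False
proof -
  obtain X0 where X0: "pref_ok X0" "biv (pre X0) D" using prefix_biv by blast
  define ch where "ch G t = (SOME R. okR R \<and> biv (G(Suc t := Kg R)) (Suc t))" for G t
  define seq where "seq = rec_nat (pre X0) (\<lambda>k G. G(Suc (D + k) := Kg (ch G (D + k))))"
  have seq0: "seq 0 = pre X0" unfolding seq_def by simp
  have seqS: "seq (Suc k) = (seq k)(Suc (D + k) := Kg (ch (seq k) (D + k)))" for k
    unfolding seq_def by simp
  have bs: "biv (seq k) (D + k)" for k
  proof (induction k)
    case 0 then show ?case using X0 seq0 by simp
  next
    case (Suc k)
    have "\<exists>R. okR R \<and> biv ((seq k)(Suc (D + k) := Kg R)) (Suc (D + k))"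
      using free_step[OF Suc.IH] by simp
    then have "okR (ch (seq k) (D + k)) \<and> biv ((seq k)(Suc (D + k) := Kg (ch (seq k) (D + k)))) (Suc (D + k))"
      unfolding ch_def by (rule someI_ex)
    then show ?case unfolding seqS[of k] add_Suc_right by (rule conjunct2)
  qed
  have okk: "okR (ch (seq k) (D + k))" for k
  proof -
    have "\<exists>R. okR R \<and> biv ((seq k)(Suc (D + k) := Kg R)) (Suc (D + k))"
      using free_step[OF bs[of k]] by simp
    then have "okR (ch (seq k) (D + k)) \<and> biv ((seq k)(Suc (D + k) := Kg (ch (seq k) (D + k)))) (Suc (D + k))"
      unfolding ch_def by (rule someI_ex)
    then show ?thesis by simp
  qed
  have sa: "r \<le> D + k \<Longrightarrow> seq (k + j) r = seq k r" for r k j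
  proof (induction j)
    case 0 then show ?case by simp
  next
    case (Suc j)
    have "seq (k + Suc j) r = seq (k + j) r" using seqS[of "k + j"] Suc.prems by simp
    then show ?case using Suc by simp
  qed
  define H where "H r = seq (r - D) r" for r
  have HA: "H r = seq k r" if r: "r \<le> D + k" for r k
  proof (cases "r \<le> D")
    case True
    then have "seq (0 + k) r = seq 0 r" using sa[of r 0 k] by simp
    then show ?thesis unfolding H_def using True by simp
  next
    case False
    define j where "j = r - D"
    have jk: "j \<le> k" "r \<le> D + j" using r False unfolding j_def by auto
    have "seq (j + (k - j)) r = seq j r" using sa[OF jk(2)] .
    then show ?thesis unfolding H_def j_def[symmetric] using jk by simp
  qed
  have inSH: "inS H"
    unfolding inS_def
  proof (intro conjI allI impI)
    show "\<exists>X. pref_ok X \<and> (\<forall>r. 1 \<le> r \<and> r \<le> D \<longrightarrow> H r = X)"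
    proof (intro exI conjI allI impI)
      show "pref_ok X0" by (rule X0(1))
      fix r assume "1 \<le> r \<and> r \<le> D"
      then show "H r = X0" using HA[of r 0] seq0 by simp
    qed
    fix r assume r: "D < r"
    define k where "k = r - D - 1"
    have rk: "r = Suc (D + k)" using r unfolding k_def by simp
    have "H r = seq (Suc k) r" using HA[of r "Suc k"] rk by simp
    also have "\<dots> = Kg (ch (seq k) (D + k))" using seqS[of k] rk by simp
    finally show "\<exists>R. okR R \<and> H r = Kg R" using okk[of k] by blast
  qed
  have n0: "0 < n" using D1 Dn by simp
  obtain v where v: "decides dec (st H) 0 v" using termi[OF inSH n0] by blast
  obtain r0 where r0: "\<And>st'. (\<forall>r\<le>r0. st' r 0 = st H r 0) \<Longrightarrow> decides dec st' 0 v"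
    using dec_prefix[OF v] by blast
  have allv: "u = v" if u: "u \<in> Val (seq r0) (D + r0)" for u
  proof -
    obtain G' p where G': "inS G'" "\<forall>r. 1 \<le> r \<and> r \<le> D + r0 \<longrightarrow> G' r = seq r0 r" "p < n"
      "decides dec (st G') p u" using u unfolding Val_def by blast
    have "\<forall>r\<le>r0. st G' r 0 = st H r 0"
    proof (intro allI impI)
      fix r assume r: "r \<le> r0"
      have "\<forall>r'. 1 \<le> r' \<and> r' \<le> r \<longrightarrow> G' r' = H r'"
        using G'(2) HA[of _ r0] r by auto
      then have "st G' r = st H r" by (rule run_agree)
      then show "st G' r 0 = st H r 0" by simp
    qed
    then have "decides dec (st G') 0 v" by (rule r0)
    then show ?thesis using agr[OF G'(1) G'(3) n0 G'(4)] by simp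
  qed
  obtain a c where "a \<noteq> c" "a \<in> Val (seq r0) (D + r0)" "c \<in> Val (seq r0) (D + r0)"
    using bs[of r0] unfolding biv_def by blast
  then show False using allv by blast
qed

end

lemma solves_mono: "MA' \<subseteq> MA \<Longrightarrow> solves_consensus n MA init msg tr dec \<Longrightarrow> solves_consensus n MA' init msg tr dec"
  unfolding solves_consensus_def by blast

theorem theorem2:
  fixes n D x :: nat and v0 v1 :: 'v
  assumes "1 \<le> D" and "D \<le> n - 1" and "1 \<le> x" and "x \<le> D" and "v0 \<noteq> v1"
  shows "\<not> (\<exists>(init :: nat \<Rightarrow> 'v \<Rightarrow> 's) (msg :: nat \<Rightarrow> 's \<Rightarrow> nat \<Rightarrow> 'm) tr dec.
              solves_consensus n (EV_STABLE n D x) init msg tr dec)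
       \<and> \<not> (\<exists>(init :: nat \<Rightarrow> 'v \<Rightarrow> 's) (msg :: nat \<Rightarrow> 's \<Rightarrow> nat \<Rightarrow> 'm) tr dec.
              solves_consensus n (EV_STABLE_init n D x) init msg tr dec)"
proof -
  have Dn: "D < n" using assms(1,2) by simp
  have main: "\<not> (\<exists>(init :: nat \<Rightarrow> 'v \<Rightarrow> 's) (msg :: nat \<Rightarrow> 's \<Rightarrow> nat \<Rightarrow> 'm) tr dec.
              solves_consensus n (EV_STABLE_init n D x) init msg tr dec)"
  proof
    assume "\<exists>(init :: nat \<Rightarrow> 'v \<Rightarrow> 's) (msg :: nat \<Rightarrow> 's \<Rightarrow> nat \<Rightarrow> 'm) tr dec.
              solves_consensus n (EV_STABLE_init n D x) init msg tr dec"
    then obtain init :: "nat \<Rightarrow> 'v \<Rightarrow> 's" and msg :: "nat \<Rightarrow> 's \<Rightarrow> nat \<Rightarrow> 'm" and tr dec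
      where s: "solves_consensus n (EV_STABLE_init n D x) init msg tr dec" by blast
    interpret A: Alg n D init msg tr dec x v0 v1
      by unfold_locales (use assms Dn s in auto)
    show False by (rule A.contradiction)
  qed
  moreover have "EV_STABLE_init n D x \<subseteq> EV_STABLE n D x" unfolding EV_STABLE_init_def by blast
  ultimately show ?thesis using solves_mono by blast
qed


end
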